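(* Let $w_0\to w_1\to\dots\to w_t$ be a reduced computation (as defined in the context) with $w_0$ and $w_t$ both equal to the empty word. Then $t=0$.
   Context: Let $\mathcal{A}$ be a finite non-empty alphabet, $\mathcal{A}_1=\{a_1:a\in\mathcal{A}\}$ a disjoint copy of $\mathcal{A}$, and $\mathcal{B}=\{b_1,b_2\}$; let $F=F(\mathcal{A}_1\sqcup\mathcal{B})$ be the free group, whose elements are identified with reduced words. Let $D=4|\mathcal{A}|(|\mathcal{A}|+2)$, fix a bijection $\eta:(\mathcal{A}\sqcup\mathcal{B})\times\mathcal{A}\to\{1,\dots,D/4\}$, and for $y\in\mathcal{A}\sqcup\mathcal{B}$, $a\in\mathcal{A}$, with $k=\eta(y,a)$, put $v(y,a)=b_1^k(b_2b_1)^{D-2k}b_2^k$. For $y\in\mathcal{A}\sqcup\mathcal{B}$ let $\psi_y$ be the automorphism of $F$ fixing $b_1,b_2$ and sending $a_1\mapsto v(y,a)a_1$ for each $a\in\mathcal{A}$; let $u_y=b_i^{-1}$ if $y=b_i$ and $u_y=a_1^{-1}$ if $y=a\in\mathcal{A}$. Rules: $w\cdot\theta_y=\psi_y(w)u_y$ and $w\cdot\theta_y^{-1}=\psi_y^{-1}(wu_y^{-1})$ (freely reduced). A computation is a sequence $w_0,\dots,w_t\in F$ with $w_i=w_{i-1}\cdot\theta_{y_i}^{\varepsilon_i}$, $y_i\in\mathcal{A}\sqcup\mathcal{B}$, $\varepsilon_i\in\{\pm1\}$; its history is $\theta_{y_1}^{\varepsilon_1}\cdots\theta_{y_t}^{\varepsilon_t}$,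 and it is reduced if the history is a freely reduced word. *)

theory Defs
  imports Main
begin

text \<open>Generators of F: the copy a_1 of each a in the alphabet 'a, and b_1, b_2.
  The same datatype also indexes the set A \<union> B of rule labels y (Ag a stands for a).\<close>
datatype 'a gen = Ag 'a | B1 | B2

text \<open>A letter is a generator with a sign (True = positive, False = inverse);
  elements of the free group are reduced words.\<close>
type_synonym 'a letter = "'a gen \<times> bool"
type_synonym 'a word = "'a letter list"

fun red :: "'a word \<Rightarrow> 'a word" where
  "red [] = []"
| "red (x # xs) = (case red xs of
      [] \<Rightarrow> [x]
    | y # ys \<Rightarrow> (if fst x = fst y \<and> snd x \<noteq> snd y then ys else x # y # ys))"

definition reduced_word :: "('b \<times> bool) list \<Rightarrow> bool" where
  "reduced_word xs \<longleftrightarrow>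
     (\<forall>i. Suc i < length xs \<longrightarrow> \<not> (fst (xs ! i) = fst (xs ! Suc i) \<and> snd (xs ! i) \<noteq> snd (xs ! Suc i)))"

definition winv :: "'a word \<Rightarrow> 'a word" where
  "winv w = rev (map (\<lambda>(g, s). (g, \<not> s)) w)"

definition Dconst :: "'a itself \<Rightarrow> nat" where
  "Dconst (_ :: 'a itself) = 4 * card (UNIV :: 'a set) * (card (UNIV :: 'a set) + 2)"

definition vword :: "('a gen \<times> 'a \<Rightarrow> nat) \<Rightarrow> 'a gen \<Rightarrow> 'a \<Rightarrow> 'a word" where
  "vword eta y a = (let k = eta (y, a) in
     replicate k (B1, True) @ concat (replicate (Dconst TYPE('a) - 2 * k) [(B2, True), (B1, True)])
     @ replicate k (B2, True))"

definition hom_ext :: "('a gen \<Rightarrow> 'a word) \<Rightarrow> 'a word \<Rightarrow> 'a word" where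
  "hom_ext f w = red (concat (map (\<lambda>(g, s). if s then f g else winv (f g)) w))"

definition psi :: "('a gen \<times> 'a \<Rightarrow> nat) \<Rightarrow> 'a gen \<Rightarrow> 'a word \<Rightarrow> 'a word" where
  "psi eta y = hom_ext (\<lambda>g. case g of Ag a \<Rightarrow> vword eta y a @ [(Ag a, True)] | _ \<Rightarrow> [(g, True)])"

definition psi_inv :: "('a gen \<times> 'a \<Rightarrow> nat) \<Rightarrow> 'a gen \<Rightarrow> 'a word \<Rightarrow> 'a word" where
  "psi_inv eta y = hom_ext (\<lambda>g. case g of Ag a \<Rightarrow> winv (vword eta y a) @ [(Ag a, True)] | _ \<Rightarrow> [(g, True)])"

definition uword :: "'a gen \<Rightarrow> 'a word" where
  "uword y = [(y, False)]"

text \<open>Application of the rule theta_y^eps (eps = True means +1).\<close>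
definition step :: "('a gen \<times> 'a \<Rightarrow> nat) \<Rightarrow> 'a gen \<times> bool \<Rightarrow> 'a word \<Rightarrow> 'a word" where
  "step eta r w = (case r of (y, e) \<Rightarrow>
     if e then red (psi eta y w @ uword y)
     else psi_inv eta y (red (w @ winv (uword y))))"

end

theory Submission
  imports Defs
begin


definition canc :: "('b \<times> bool) \<Rightarrow> ('b \<times> bool) \<Rightarrow> bool" where
  "canc x y \<longleftrightarrow> fst x = fst y \<and> snd x \<noteq> snd y"

fun rdw :: "('b \<times> bool) list \<Rightarrow> bool" where
  "rdw [] = True"
| "rdw [x] = True"
| "rdw (x # y # ys) = (\<not> canc x y \<and> rdw (y # ys))"

definition cr :: "'a letter \<Rightarrow> 'a word \<Rightarrow> 'a word" where
  "cr x zs = (case zs of [] \<Rightarrow> [x] | y # ys \<Rightarrow> (if canc x y then ys else x # y # ys))"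

lemma red_cons: "red (x # xs) = cr x (red xs)"
  by (simp add: cr_def canc_def split: list.split)

declare red.simps(2)[simp del]

lemma rdw_eq: "rdw xs = reduced_word xs"
proof (induction xs rule: rdw.induct)
  case (3 x y ys)
  show ?case unfolding rdw.simps 3 reduced_word_def
  proof
    assume A: "\<not> canc x y \<and> (\<forall>i. Suc i < length (y # ys) \<longrightarrow> \<not> (fst ((y # ys) ! i) = fst ((y # ys) ! Suc i) \<and> snd ((y # ys) ! i) \<noteq> snd ((y # ys) ! Suc i)))"
    show "\<forall>i. Suc i < length (x # y # ys) \<longrightarrow> \<not> (fst ((x # y # ys) ! i) = fst ((x # y # ys) ! Suc i) \<and> snd ((x # y # ys) ! i) \<noteq> snd ((x # y # ys) ! Suc i))"
    proof (intro allI impI)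
      fix i assume "Suc i < length (x # y # ys)"
      then show "\<not> (fst ((x # y # ys) ! i) = fst ((x # y # ys) ! Suc i) \<and> snd ((x # y # ys) ! i) \<noteq> snd ((x # y # ys) ! Suc i))"
        using A by (cases i) (auto simp: canc_def)
    qed
  next
    assume A: "\<forall>i. Suc i < length (x # y # ys) \<longrightarrow> \<not> (fst ((x # y # ys) ! i) = fst ((x # y # ys) ! Suc i) \<and> snd ((x # y # ys) ! i) \<noteq> snd ((x # y # ys) ! Suc i))"
    show "\<not> canc x y \<and> (\<forall>i. Suc i < length (y # ys) \<longrightarrow> \<not> (fst ((y # ys) ! i) = fst ((y # ys) ! Suc i) \<and> snd ((y # ys) ! i) \<noteq> snd ((y # ys) ! Suc i)))"
    proof
      show "\<not> canc x y" using A[rule_format, of 0] by (auto simp: canc_def)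
      show "\<forall>i. Suc i < length (y # ys) \<longrightarrow> \<not> (fst ((y # ys) ! i) = fst ((y # ys) ! Suc i) \<and> snd ((y # ys) ! i) \<noteq> snd ((y # ys) ! Suc i))"
        using A by (metis Suc_less_eq length_Cons nth_Cons_Suc)
    qed
  qed
qed (auto simp: reduced_word_def)

lemma rdw_cr: "rdw zs \<Longrightarrow> rdw (cr x zs)"
  by (cases zs rule: rdw.cases) (auto simp: cr_def)

lemma rdw_red: "rdw (red xs)"
  by (induction xs) (auto simp: red_cons rdw_cr)

lemma cr_id: "rdw (x # zs) \<Longrightarrow> cr x zs = x # zs"
  by (cases zs) (auto simp: cr_def)

lemma red_id: "rdw xs \<Longrightarrow> red xs = xs"
proof (induction xs)
  case (Cons x xs)
  then have "rdw xs" by (cases xs) auto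
  then show ?case using Cons by (simp add: red_cons cr_id)
qed simp

lemma red_red[simp]: "red (red xs) = red xs"
  by (simp add: red_id rdw_red)

lemma red_app_r: "red (xs @ ys) = red (xs @ red ys)"
  by (induction xs) (auto simp: red_cons)

definition iv :: "('b \<times> bool) \<Rightarrow> ('b \<times> bool)" where "iv x = (fst x, \<not> snd x)"

lemma canc_iv: "canc x y \<longleftrightarrow> y = iv x"
  by (cases x; cases y) (auto simp: canc_def iv_def)

lemma cr_cr_inv: "rdw zs \<Longrightarrow> cr x (cr (iv x) zs) = zs"
proof (cases zs)
  case Nil then show ?thesis by (simp add: cr_def canc_iv iv_def)
next
  case (Cons y ys)
  assume r: "rdw zs"
  show ?thesis
  proof (cases "y = x")
    case True
    then have c1: "canc (iv x) y" by (simp add: canc_iv iv_def)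
    have "\<not> canc x (hd ys)" if "ys \<noteq> []" using r Cons True that by (cases ys) auto
    then show ?thesis using Cons c1 True by (cases ys) (auto simp: cr_def)
  next
    case False
    then have "\<not> canc (iv x) y" by (cases x; cases y) (auto simp: canc_iv iv_def)
    moreover have "canc x (iv x)" by (simp add: canc_iv)
    ultimately show ?thesis using Cons by (simp add: cr_def)
  qed
qed

lemma red_cr: "rdw zs \<Longrightarrow> red (cr x zs @ ys) = cr x (red (zs @ ys))"
proof (cases zs)
  case Nil then show ?thesis by (simp add: cr_def red_cons)
next
  case (Cons y ys')
  assume r: "rdw zs"
  show ?thesis
  proof (cases "canc x y")
    case True
    then have yx: "y = iv x" by (simp add: canc_iv)
    have "x = iv y" using yx by (cases x) (simp add: iv_def)
    have "red (ys' @ ys) = cr x (cr y (red (ys' @ ys)))"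
      using cr_cr_inv[of "red (ys' @ ys)" x] yx rdw_red by metis
    then show ?thesis using Cons True by (simp add: cr_def red_cons)
  next
    case False
    then show ?thesis using Cons by (simp add: cr_def red_cons)
  qed
qed

lemma red_app_l: "red (xs @ ys) = red (red xs @ ys)"
proof (induction xs)
  case (Cons x xs)
  have "red ((x # xs) @ ys) = cr x (red (xs @ ys))" by (simp add: red_cons)
  also have "\<dots> = cr x (red (red xs @ ys))" using Cons by simp
  also have "\<dots> = red (cr x (red xs) @ ys)" using red_cr[OF rdw_red] by metis
  finally show ?case by (simp add: red_cons)
qed simp

lemma red_app: "red (xs @ ys) = red (red xs @ red ys)"
  by (metis red_app_l red_app_r)

lemma red_cong: "red xs = red xs' \<Longrightarrow> red ys = red ys' \<Longrightarrow> red (xs @ ys) = red (xs' @ ys')"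
  by (metis red_app)

lemma red_cancel2: "red (x # iv x # ys) = red ys"
proof -
  have "red (x # iv x # ys) = cr x (cr (iv x) (red ys))" by (simp add: red_cons)
  also have "\<dots> = red ys" by (simp add: cr_cr_inv rdw_red)
  finally show ?thesis .
qed

lemma winv_Nil[simp]: "winv [] = []" by (simp add: winv_def)
lemma winv_Cons: "winv (x # xs) = winv xs @ [iv x]"
  by (cases x) (simp add: winv_def iv_def)
lemma winv_app[simp]: "winv (xs @ ys) = winv ys @ winv xs" by (simp add: winv_def)
lemma winv_winv[simp]: "winv (winv xs) = xs" by (induction xs) (auto simp: winv_def)
lemma length_winv[simp]: "length (winv xs) = length xs" by (simp add: winv_def)
lemma winv_single[simp]: "winv [(g, s)] = [(g, \<not> s)]" by (simp add: winv_def)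

lemma red_cancel: "red (zs @ winv zs @ ys) = red ys"
proof (induction zs arbitrary: ys rule: rev_induct)
  case (snoc x zs)
  have "red ((zs @ [x]) @ winv (zs @ [x]) @ ys) = red (zs @ (x # iv x # winv zs @ ys))"
    by (cases x) (simp add: winv_def iv_def)
  also have "\<dots> = red (zs @ red (x # iv x # winv zs @ ys))" by (rule red_app_r)
  also have "\<dots> = red (zs @ red (winv zs @ ys))" by (simp add: red_cancel2)
  also have "\<dots> = red (zs @ winv zs @ ys)" by (metis red_app_r)
  finally show ?case using snoc by simp
qed simp

lemma red_cancel': "red (winv zs @ zs @ ys) = red ys"
  using red_cancel[of "winv zs"] by simp

lemma red_Nil[simp]: "red [] = []" by simp

lemma red_eqI: "rdw ys \<Longrightarrow> red xs = red ys \<Longrightarrow> red xs = ys"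
  by (simp add: red_id)



lemma red_mid: "red (A @ red B @ C) = red (A @ B @ C)"
  by (metis red_app_l red_app_r)
lemma red_l: "red (red B @ C) = red (B @ C)" by (metis red_app_l)
lemma red_r: "red (A @ red B) = red (A @ B)" by (metis red_app_r)
lemma red_c1: "red (x # red B) = red (x # B)" using red_r[of "[x]" B] by simp
lemma red_c2: "red (x # red B @ C) = red (x # B @ C)" using red_mid[of "[x]" B C] by simp
lemmas red_simps = red_mid red_l red_r red_c1 red_c2

definition isB :: "'a letter \<Rightarrow> bool" where "isB l \<longleftrightarrow> fst l = B1 \<or> fst l = B2"
definition allB :: "'a word \<Rightarrow> bool" where "allB xs \<longleftrightarrow> (\<forall>l\<in>set xs. isB l)"

lemma allB_simps[simp]: "allB [] " "allB (x # xs) \<longleftrightarrow> isB x \<and> allB xs" "allB (xs @ ys) \<longleftrightarrow> allB xs \<and> allB ys"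
  by (auto simp: allB_def)

lemma isB_Ag[simp]: "\<not> isB (Ag a, s)" by (simp add: isB_def)

lemma set_cr: "set (cr x zs) \<subseteq> insert x (set zs)"
  by (auto simp: cr_def split: list.split)

lemma set_red: "set (red xs) \<subseteq> set xs"
proof (induction xs)
  case (Cons x xs) then show ?case using set_cr[of x "red xs"] by (auto simp: red_cons)
qed simp

lemma allB_red: "allB xs \<Longrightarrow> allB (red xs)"
  using set_red by (fastforce simp: allB_def)

lemma rdw_Cons: "rdw (x # xs) \<longleftrightarrow> rdw xs \<and> (xs \<noteq> [] \<longrightarrow> \<not> canc x (hd xs))"
  by (cases xs) auto

lemma rdw_app: "rdw (xs @ ys) \<longleftrightarrow> rdw xs \<and> rdw ys \<and> (xs \<noteq> [] \<and> ys \<noteq> [] \<longrightarrow> \<not> canc (last xs) (hd ys))"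
proof (induction xs)
  case (Cons x xs)
  then show ?case by (cases xs) (auto simp: rdw_Cons)
qed simp

lemma rdw_appD: "rdw (xs @ ys) \<Longrightarrow> rdw xs \<and> rdw ys"
  by (simp add: rdw_app)

lemma rdw_snoc: "rdw A \<Longrightarrow> (A \<noteq> [] \<Longrightarrow> \<not> canc (last A) x) \<Longrightarrow> rdw (A @ [x])"
  by (simp add: rdw_app)

lemma rdw_glue: "rdw (A @ B) \<Longrightarrow> rdw (B @ C) \<Longrightarrow> B \<noteq> [] \<Longrightarrow> rdw (A @ B @ C)"
  by (auto simp: rdw_app)

lemma rdw_sign: "\<forall>l\<in>set xs. snd l = b \<Longrightarrow> rdw xs"
proof (induction xs)
  case (Cons x xs) then show ?case by (cases xs) (auto simp: canc_def rdw_Cons)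
qed simp

lemma canc_AB: "isB y \<Longrightarrow> \<not> canc (Ag a, s) y" "isB y \<Longrightarrow> \<not> canc y (Ag a, s)"
  by (auto simp: canc_def isB_def)

lemma rdw_QxG: "rdw (Q @ [(Ag a, s)]) \<Longrightarrow> allB G \<Longrightarrow> rdw G \<Longrightarrow> rdw (Q @ [(Ag a, s)] @ G)"
  by (cases G) (auto simp: rdw_app allB_def canc_def isB_def)

lemma rdw_xG: "allB G \<Longrightarrow> rdw G \<Longrightarrow> rdw ((Ag a, s) # G)"
  using rdw_QxG[of "[]" a s G] by simp

definition fc :: "('a \<Rightarrow> 'a word) \<Rightarrow> 'a gen \<Rightarrow> 'a word" where
  "fc c g = (case g of Ag a \<Rightarrow> c a @ [(Ag a, True)] | _ \<Rightarrow> [(g, True)])"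

definition cm :: "('a gen \<Rightarrow> 'a word) \<Rightarrow> 'a word \<Rightarrow> 'a word" where
  "cm f w = concat (map (\<lambda>(g, s). if s then f g else winv (f g)) w)"

lemma hom_cm: "hom_ext f w = red (cm f w)" by (simp add: hom_ext_def cm_def)
lemma cm_app[simp]: "cm f (u @ v) = cm f u @ cm f v" by (simp add: cm_def)
lemma cm_Nil[simp]: "cm f [] = []" by (simp add: cm_def)

lemma cm_B: "allB w \<Longrightarrow> cm (fc c) w = w"
proof (induction w)
  case (Cons x w)
  obtain g s where x: "x = (g, s)" by fastforce
  have "g = B1 \<or> g = B2" using Cons x by (simp add: isB_def)
  then have "cm (fc c) [x] = [x]" using x by (auto simp: cm_def fc_def)
  then show ?case using Cons cm_app[of "fc c" "[x]" w] by simp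
qed simp

definition Rc :: "('a \<Rightarrow> 'a word) \<Rightarrow> 'a \<Rightarrow> bool \<Rightarrow> 'a word" where
  "Rc c a s = (if s then c a else [])"
definition Lc :: "('a \<Rightarrow> 'a word) \<Rightarrow> 'a \<Rightarrow> bool \<Rightarrow> 'a word" where
  "Lc c a s = (if s then [] else winv (c a))"

lemma cm_A: "cm (fc c) [(Ag a, s)] = Rc c a s @ [(Ag a, s)] @ Lc c a s"
  by (simp add: cm_def fc_def Rc_def Lc_def)

lemma cm_A2: "cm (fc c) ((Ag a, s) # w) = Rc c a s @ [(Ag a, s)] @ Lc c a s @ cm (fc c) w"
  using cm_app[of "fc c" "[(Ag a, s)]" w] cm_A[of c a s] by simp

lemma hom_B: "allB w \<Longrightarrow> hom_ext (fc c) w = red w"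
  by (simp add: hom_cm cm_B)

lemma allB_winv: "allB xs \<Longrightarrow> allB (winv xs)"
  by (auto simp: allB_def winv_def isB_def)

lemma split_last_A: "\<not> allB P \<Longrightarrow> \<exists>P0 a0 s0 g0. P = P0 @ [(Ag a0, s0)] @ g0 \<and> allB g0"
proof (induction P rule: rev_induct)
  case (snoc x xs)
  show ?case
  proof (cases "isB x")
    case True
    then have "\<not> allB xs" using snoc by simp
    then obtain P0 a0 s0 g0 where "xs = P0 @ [(Ag a0, s0)] @ g0 \<and> allB g0" using snoc by blast
    then show ?thesis using True by (intro exI[of _ P0] exI[of _ a0] exI[of _ s0] exI[of _ "g0 @ [x]"]) simp
  next
    case False
    then obtain a0 s0 where "x = (Ag a0, s0)" by (cases x; cases "fst x") (auto simp: isB_def)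
    then show ?thesis by (intro exI[of _ xs] exI[of _ a0] exI[of _ s0] exI[of _ "[]"]) simp
  qed
qed simp

lemma gap_ok:
  assumes c: "\<forall>a. allB (c a) \<and> rdw (c a)"
    and r: "rdw (P0 @ [(Ag a0, s0)] @ g0 @ [(Ag a, s)] @ g)"
    and gB: "allB g0"
    and G0: "red (Lc c a0 s0 @ g0 @ Rc c a s) = []"
  shows "\<not> canc (Ag a0, s0) (Ag a, s)"
proof
  assume cc: "canc (Ag a0, s0) (Ag a, s)"
  then have aa: "a0 = a" and ss: "s = (\<not> s0)" by (auto simp: canc_def)
  have "rdw ((P0 @ [(Ag a0, s0)]) @ (g0 @ [(Ag a, s)] @ g))" using r by simp
  then have "rdw (g0 @ [(Ag a, s)] @ g)" by (rule rdw_appD[THEN conjunct2])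
  then have rg0: "rdw g0" by (rule rdw_appD[THEN conjunct1])
  have "g0 \<noteq> []" using r cc by (auto simp: rdw_app)
  have "red g0 = []"
  proof (cases s0)
    case True
    then show ?thesis using G0 ss by (simp add: Lc_def Rc_def)
  next
    case False
    then have G: "red (winv (c a) @ g0 @ c a) = []" using G0 ss aa by (simp add: Lc_def Rc_def)
    have "red g0 = red (g0 @ c a @ winv (c a))" using red_cancel[of "c a" "[]"] red_r[of g0 "c a @ winv (c a)"] by simp
    also have "\<dots> = red (c a @ winv (c a) @ g0 @ c a @ winv (c a))" using red_cancel[of "c a"] by simp
    also have "\<dots> = red (c a @ red (winv (c a) @ g0 @ c a) @ winv (c a))" by (simp add: red_mid)
    also have "\<dots> = []" using G red_cancel[of "c a" "[]"] by simp
    finally show ?thesis .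
  qed
  then show False using \<open>g0 \<noteq> []\<close> rg0 red_id by metis
qed

lemma skel:
  assumes c: "\<forall>a. allB (c a) \<and> rdw (c a)"
  shows "rdw (P @ [(Ag a, s)] @ g) \<Longrightarrow> allB g \<Longrightarrow>
    \<exists>P'. hom_ext (fc c) (P @ [(Ag a, s)] @ g) = P' @ [(Ag a, s)] @ red (Lc c a s @ g) \<and> rdw (P' @ [(Ag a, s)])"
proof (induction "length P" arbitrary: P a s g rule: less_induct)
  case less
  have cB: "allB (Rc c a s)" "allB (Lc c a s)" using c by (auto simp: Rc_def Lc_def allB_winv)
  show ?case
  proof (cases "allB P")
    case True
    let ?P' = "red (P @ Rc c a s)"
    have B1: "allB ?P'" using True cB by (simp add: allB_red)
    have B2: "allB (red (Lc c a s @ g))" using less cB by (simp add: allB_red)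
    have rP: "rdw (?P' @ [(Ag a, s)])"
    proof -
      have "?P' \<noteq> [] \<Longrightarrow> isB (last ?P')" using B1 by (simp add: allB_def)
      then show ?thesis unfolding rdw_app using rdw_red[of "P @ Rc c a s"] by (auto simp: canc_def isB_def)
    qed
    have rT: "rdw (?P' @ [(Ag a, s)] @ red (Lc c a s @ g))"
      using rdw_QxG[OF rP B2 rdw_red] less by simp
    have "hom_ext (fc c) (P @ [(Ag a, s)] @ g) = red (P @ Rc c a s @ [(Ag a, s)] @ Lc c a s @ g)"
      using True less(3) by (simp add: hom_cm cm_B cm_A2)
    also have "\<dots> = ?P' @ [(Ag a, s)] @ red (Lc c a s @ g)"
      apply (rule red_eqI[OF rT])
      using red_r[of "?P' @ [(Ag a, s)]" "Lc c a s @ g"] red_l[of "P @ Rc c a s" "[(Ag a, s)] @ Lc c a s @ g"]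
      by simp
    finally show ?thesis using rP by blast
  next
    case False
    then obtain P0 a0 s0 g0 where P: "P = P0 @ [(Ag a0, s0)] @ g0" and g0: "allB g0"
      using split_last_A by blast
    have "rdw ((P0 @ [(Ag a0, s0)] @ g0) @ [(Ag a, s)] @ g)" using less(2) P by simp
    then have r0: "rdw (P0 @ [(Ag a0, s0)] @ g0)" by (rule rdw_appD[THEN conjunct1])
    obtain P0' where IH: "hom_ext (fc c) (P0 @ [(Ag a0, s0)] @ g0) = P0' @ [(Ag a0, s0)] @ red (Lc c a0 s0 @ g0)"
      and rP0: "rdw (P0' @ [(Ag a0, s0)])"
      using less(1)[of P0 a0 s0 g0] P r0 g0 by auto
    define G0 where "G0 = red (Lc c a0 s0 @ g0 @ Rc c a s)"
    have cB0: "allB (Lc c a0 s0)" using c by (auto simp: Lc_def allB_winv)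
    have G0B: "allB G0" using cB cB0 g0 by (simp add: G0_def allB_red)
    have jn: "G0 = [] \<Longrightarrow> \<not> canc (Ag a0, s0) (Ag a, s)"
      using gap_ok[OF c _ g0] less(2) P G0_def by auto
    have rA: "rdw (P0' @ [(Ag a0, s0)] @ G0)" using rdw_QxG[OF rP0 G0B] by (simp add: G0_def rdw_red)
    have rB: "rdw ((P0' @ [(Ag a0, s0)] @ G0) @ [(Ag a, s)])"
    proof -
      have "\<not> canc (last (P0' @ [(Ag a0, s0)] @ G0)) (Ag a, s)"
      proof (cases "G0 = []")
        case True then show ?thesis using jn by simp
      next
        case False then have "isB (last G0)" using G0B by (simp add: allB_def)
        then show ?thesis using False canc_AB by simp
      qed
      then show ?thesis using rdw_snoc[OF rA] by blast
    qed
    have B2: "allB (red (Lc c a s @ g))" using less cB by (simp add: allB_red)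
    have rT: "rdw ((P0' @ [(Ag a0, s0)] @ G0) @ [(Ag a, s)] @ red (Lc c a s @ g))"
      using rdw_QxG[OF rB B2 rdw_red] less by simp
    have "hom_ext (fc c) (P @ [(Ag a, s)] @ g) = red (hom_ext (fc c) (P0 @ [(Ag a0, s0)] @ g0) @ Rc c a s @ [(Ag a, s)] @ Lc c a s @ g)"
      using P less(3) g0 by (simp add: hom_cm cm_B cm_A2 red_simps)
    also have "\<dots> = (P0' @ [(Ag a0, s0)] @ G0) @ [(Ag a, s)] @ red (Lc c a s @ g)"
      unfolding IH apply (rule red_eqI[OF rT])
      using red_r[of "P0' @ [(Ag a0, s0)] @ G0 @ [(Ag a, s)]" "Lc c a s @ g"]
        red_mid[of "P0' @ [(Ag a0, s0)]" "Lc c a0 s0 @ g0 @ Rc c a s" "[(Ag a, s)] @ Lc c a s @ g"]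
        red_mid[of "P0' @ [(Ag a0, s0)]" "Lc c a0 s0 @ g0" "Rc c a s @ [(Ag a, s)] @ Lc c a s @ g"]
      by (simp add: G0_def)
    finally show ?thesis using rB by blast
  qed
qed



definition pw :: "'a letter \<Rightarrow> 'a letter \<Rightarrow> nat \<Rightarrow> nat \<Rightarrow> 'a word" where
  "pw x y n k = replicate k x @ concat (replicate n [y, x]) @ replicate k y"

lemma winv_rep: "winv (replicate k x) = replicate k (iv x)"
  by (cases x) (simp add: winv_def iv_def)

lemma crep_snoc: "concat (replicate (Suc n) L) = concat (replicate n L) @ L"
  by (induction n) auto

lemma winv_crep: "winv (concat (replicate n [y, x])) = concat (replicate n [iv x, iv y])"
proof (induction n)
  case (Suc n)
  have "winv (concat (replicate (Suc n) [y, x])) = winv ([y, x] @ concat (replicate n [y, x]))" by simp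
  also have "\<dots> = concat (replicate n [iv x, iv y]) @ [iv x, iv y]"
    using Suc by (simp add: winv_Cons)
  also have "\<dots> = concat (replicate (Suc n) [iv x, iv y])" by (rule crep_snoc[symmetric])
  finally show ?case .
qed simp

lemma last_crep: "n \<ge> 1 \<Longrightarrow> last (concat (replicate n [y, x])) = x"
proof -
  assume "n \<ge> 1"
  then obtain m where "n = Suc m" by (cases n) auto
  then have "concat (replicate n [y, x]) = concat (replicate m [y, x]) @ [y, x]"
    using crep_snoc by metis
  then show ?thesis by simp
qed

lemma hd_crep: "n \<ge> 1 \<Longrightarrow> hd (concat (replicate n [y, x])) = y"
  by (cases n) auto

lemma length_crep: "length (concat (replicate n [y, x])) = 2 * n"
  by (induction n) auto

lemma length_pw: "length (pw x y n k) = 2 * k + 2 * n"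
  by (simp add: pw_def length_crep)

lemma iv_iv[simp]: "iv (iv x) = x" by (simp add: iv_def)

lemma canc_iv2: "fst x \<noteq> fst y \<Longrightarrow> \<not> canc x (iv y)"
  by (simp add: canc_def iv_def)

lemma junction:
  assumes xy: "fst x \<noteq> fst y" and kk: "k \<noteq> k'" and n: "n \<ge> 1" and n': "n' \<ge> 1"
  shows "\<exists>Y0 Z V'. pw x y n k = Y0 @ Z \<and> pw (iv y) (iv x) n' k' = winv Z @ V' \<and> length Z = min k k'
    \<and> Y0 \<noteq> [] \<and> V' \<noteq> [] \<and> \<not> canc (last Y0) (hd V')"
proof (cases "k < k'")
  case True
  let ?Z = "replicate k y"
  let ?Y0 = "replicate k x @ concat (replicate n [y, x])"
  let ?V = "replicate (k' - k) (iv y) @ concat (replicate n' [iv x, iv y]) @ replicate k' (iv x)"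
  have "pw (iv y) (iv x) n' k' = replicate k (iv y) @ ?V"
    using True by (simp add: pw_def replicate_add[symmetric])
  moreover have "?Y0 \<noteq> []" using n by (cases n) simp_all
  moreover have "last ?Y0 = x"
  proof -
    have "concat (replicate n [y, x]) \<noteq> []" using n by (cases n) simp_all
    then show ?thesis using last_crep[OF n] by simp
  qed
  moreover have "?V \<noteq> []" "hd ?V = iv y" using True by simp_all
  ultimately show ?thesis using True canc_iv2[OF xy]
    by (intro exI[of _ ?Y0] exI[of _ ?Z] exI[of _ ?V]) (simp add: pw_def winv_rep)
next
  case False
  then have lt: "k' < k" using kk by simp
  let ?Z = "replicate k' y"
  let ?Y0 = "replicate k x @ concat (replicate n [y, x]) @ replicate (k - k') y"
  let ?V = "concat (replicate n' [iv x, iv y]) @ replicate k' (iv x)"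
  have "pw x y n k = ?Y0 @ ?Z"
    using lt by (simp add: pw_def replicate_add[symmetric])
  moreover have "?Y0 \<noteq> []" "last ?Y0 = y" using lt by simp_all
  moreover have "?V \<noteq> []" using n' by (cases n') simp_all
  moreover have "hd ?V = iv x" using n' hd_crep[OF n'] by (cases n') simp_all
  moreover have "\<not> canc y (iv x)" using canc_iv2 xy by metis
  ultimately show ?thesis using lt
    by (intro exI[of _ ?Y0] exI[of _ ?Z] exI[of _ ?V]) (simp add: pw_def winv_rep)
qed

lemma pw_sign: "snd x = b \<Longrightarrow> snd y = b \<Longrightarrow> \<forall>l\<in>set (pw x y n k). snd l = b"
proof -
  assume "snd x = b" "snd y = b"
  moreover have "set (concat (replicate n [y, x])) \<subseteq> {x, y}" by (induction n) auto
  ultimately show ?thesis by (auto simp: pw_def)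
qed

lemma red_cancel_mid: "red (A @ Z @ winv Z @ V) = red (A @ V)"
  by (metis red_app_r red_cancel)

lemma rdw_drop: "rdw xs \<Longrightarrow> rdw (drop c xs)"
  using rdw_appD[of "take c xs" "drop c xs"] by simp

lemma rdw_take: "rdw xs \<Longrightarrow> rdw (take c xs)"
  using rdw_appD[of "take c xs" "drop c xs"] by simp

lemma len_inv:
  fixes V :: "'a letter \<Rightarrow> 'a word" and M :: nat
  assumes P1: "\<And>s. isB s \<Longrightarrow> rdw (V s) \<and> (\<forall>l\<in>set (V s). snd l = snd s) \<and> 2 * M + 2 \<le> length (V s)"
    and P2: "\<And>s s'. isB s \<Longrightarrow> isB s' \<Longrightarrow> snd s \<noteq> snd s' \<Longrightarrow> fst s \<noteq> fst s' \<Longrightarrow>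
      \<exists>Y0 Z V'. V s = Y0 @ Z \<and> V s' = winv Z @ V' \<and> length Z = M \<and> Y0 \<noteq> [] \<and> V' \<noteq> [] \<and> \<not> canc (last Y0) (hd V')"
  shows "\<sigma> \<noteq> [] \<Longrightarrow> allB \<sigma> \<Longrightarrow> rdw \<sigma> \<Longrightarrow> \<exists>X c. red (concat (map V \<sigma>)) = X @ drop c (V (last \<sigma>))
     \<and> rdw (X @ drop c (V (last \<sigma>))) \<and> c \<le> M \<and> length \<sigma> \<le> length X + 1"
proof (induction \<sigma> rule: rev_induct)
  case Nil then show ?case by simp
next
  case (snoc s' \<sigma>)
  show ?case
  proof (cases "\<sigma> = []")
    case True
    have "isB s'" using snoc by simp
    then have "rdw (V s')" using P1 by blast
    then show ?thesis using True by (intro exI[of _ "[]"] exI[of _ 0]) (simp add: red_id)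
  next
    case False
    have rs: "rdw \<sigma>" using snoc(4) rdw_appD by blast
    obtain X c where IH: "red (concat (map V \<sigma>)) = X @ drop c (V (last \<sigma>))"
      "rdw (X @ drop c (V (last \<sigma>)))" "c \<le> M" "length \<sigma> \<le> length X + 1"
      using snoc(1)[OF False] snoc(3) rs by auto
    define s where "s = last \<sigma>"
    have sB: "isB s" using snoc(3) False by (simp add: s_def allB_def)
    have s'B: "isB s'" using snoc(3) by simp
    have nc: "\<not> canc s s'" using snoc(4) False by (simp add: rdw_app s_def)
    have eq0: "red (concat (map V (\<sigma> @ [s']))) = red (X @ drop c (V s) @ V s')"
      using IH(1) red_l[of "concat (map V \<sigma>)" "V s'"] by (simp add: s_def)
    have lenV: "2 * M + 2 \<le> length (V s)" using P1[OF sB] by blast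
    show ?thesis
    proof (cases "snd s = snd s'")
      case True
      have "\<forall>l\<in>set (drop c (V s) @ V s'). snd l = snd s"
        using P1[OF sB] P1[OF s'B] True by (auto dest: in_set_dropD)
      then have r1: "rdw (drop c (V s) @ V s')" by (rule rdw_sign)
      have ne: "drop c (V s) \<noteq> []" using lenV IH(3) by simp
      have r2: "rdw (X @ drop c (V s) @ V s')" using rdw_glue[OF _ r1 ne] IH(2) by (simp add: s_def)
      have "length X + 1 \<le> length (X @ drop c (V s))" using ne by (cases "drop c (V s)") auto
      then show ?thesis using eq0 red_id[OF r2] r2 IH(4)
        by (intro exI[of _ "X @ drop c (V s)"] exI[of _ 0]) simp
    next
      case False
      then have "fst s \<noteq> fst s'" using nc by (simp add: canc_def)
      then obtain Y0 Z V' where J: "V s = Y0 @ Z" "V s' = winv Z @ V'" "length Z = M"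
        "Y0 \<noteq> []" "V' \<noteq> []" "\<not> canc (last Y0) (hd V')"
        using P2[OF sB s'B False] by blast
      have lY: "c < length Y0" using lenV J(1,3) IH(3) by simp
      have dc: "drop c (V s) = drop c Y0 @ Z" using J(1) lY by simp
      have ne: "drop c Y0 \<noteq> []" using lY by simp
      have eq1: "red (concat (map V (\<sigma> @ [s']))) = red ((X @ drop c Y0) @ V')"
        using eq0 dc J(2) red_cancel_mid[of "X @ drop c Y0" Z V'] by simp
      have rVs: "rdw (V s)" "rdw (V s')" using P1[OF sB] P1[OF s'B] by blast+
      have rY: "rdw (drop c Y0)" using rVs(1) J(1) rdw_appD rdw_drop by metis
      have rV': "rdw V'" using rVs(2) J(2) rdw_appD by metis
      have lst: "last (drop c Y0) = last Y0" using lY by simp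
      have r1: "rdw (drop c Y0 @ V')" using rY rV' J(6) lst by (simp add: rdw_app)
      have "rdw ((X @ drop c Y0) @ Z)" using IH(2) dc by (simp add: s_def)
      then have r0: "rdw (X @ drop c Y0)" using rdw_appD by blast
      have r2: "rdw (X @ drop c Y0 @ V')" using rdw_glue[OF r0 r1 ne] .
      have dM: "drop M (V s') = V'" using J(2,3) by simp
      have "length X + 1 \<le> length (X @ drop c Y0)" using ne by (cases "drop c Y0") auto
      then show ?thesis using eq1 red_id[OF r2] r2 IH(4) dM
        by (intro exI[of _ "X @ drop c Y0"] exI[of _ M]) simp
    qed
  qed
qed

lemma len_core:
  fixes V :: "'a letter \<Rightarrow> 'a word" and M :: nat
  assumes P1: "\<And>s. isB s \<Longrightarrow> rdw (V s) \<and> (\<forall>l\<in>set (V s). snd l = snd s) \<and> 2 * M + 2 \<le> length (V s)"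
    and P2: "\<And>s s'. isB s \<Longrightarrow> isB s' \<Longrightarrow> snd s \<noteq> snd s' \<Longrightarrow> fst s \<noteq> fst s' \<Longrightarrow>
      \<exists>Y0 Z V'. V s = Y0 @ Z \<and> V s' = winv Z @ V' \<and> length Z = M \<and> Y0 \<noteq> [] \<and> V' \<noteq> [] \<and> \<not> canc (last Y0) (hd V')"
    and "\<sigma> \<noteq> []" "allB \<sigma>" "rdw \<sigma>"
  shows "length \<sigma> < length (red (concat (map V \<sigma>)))"
proof -
  obtain X c where I: "red (concat (map V \<sigma>)) = X @ drop c (V (last \<sigma>))" "c \<le> M" "length \<sigma> \<le> length X + 1"
    using len_inv[OF P1 P2, of \<sigma>] assms(3-5) by blast
  have "isB (last \<sigma>)" using assms(3,4) by (simp add: allB_def)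
  then have "2 * M + 2 \<le> length (V (last \<sigma>))" using P1 by blast
  then show ?thesis using I by simp
qed

definition Vf :: "('a gen \<times> 'a \<Rightarrow> nat) \<Rightarrow> 'a \<Rightarrow> 'a letter \<Rightarrow> 'a word" where
  "Vf eta a s = (if snd s then vword eta (fst s) a else winv (vword eta (fst s) a))"

lemma vword_pw: fixes eta :: "'a gen \<times> 'a \<Rightarrow> nat" shows "vword eta g a = pw (B1, True) (B2, True) (Dconst TYPE('a) - 2 * eta (g, a)) (eta (g, a))"
  by (simp add: vword_def pw_def Let_def)

lemma winv_pw: "winv (pw x y n k) = pw (iv y) (iv x) n k"
  by (simp add: pw_def winv_rep winv_crep)

lemma isB_cases: "isB s \<Longrightarrow> (\<And>b. s = (B1, b) \<Longrightarrow> P) \<Longrightarrow> (\<And>b. s = (B2, b) \<Longrightarrow> P) \<Longrightarrow> P"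
  by (cases s) (auto simp: isB_def)

lemma core_eta:
  fixes eta :: "'a gen \<times> 'a \<Rightarrow> nat"
  assumes inj: "eta (B1, a) \<noteq> eta (B2, a)"
    and bnd: "\<And>g. 1 \<le> eta (g, a) \<and> eta (g, a) \<le> Dconst TYPE('a) div 4"
    and D4: "Dconst TYPE('a) = 4 * (Dconst TYPE('a) div 4)"
    and "\<sigma> \<noteq> []" "allB \<sigma>" "rdw \<sigma>"
  shows "length \<sigma> < length (red (concat (map (Vf eta a) \<sigma>)))"
proof (rule len_core[where M = "min (eta (B1, a)) (eta (B2, a))"])
  define Q where "Q = Dconst TYPE('a) div 4"
  have D: "Dconst TYPE('a) = 4 * Q" using D4 Q_def by simp
  have VfT: "Vf eta a (g, True) = pw (B1, True) (B2, True) (4 * Q - 2 * eta (g, a)) (eta (g, a))" for g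
    by (simp add: Vf_def vword_pw D)
  have VfF: "Vf eta a (g, False) = pw (B2, False) (B1, False) (4 * Q - 2 * eta (g, a)) (eta (g, a))" for g
    by (simp add: Vf_def vword_pw D winv_pw iv_def)
  have bq: "1 \<le> eta (g, a)" "eta (g, a) \<le> Q" for g using bnd Q_def by auto
  show "rdw (Vf eta a s) \<and> (\<forall>l\<in>set (Vf eta a s). snd l = snd s) \<and>
      2 * min (eta (B1, a)) (eta (B2, a)) + 2 \<le> length (Vf eta a s)" if "isB s" for s
  proof -
    obtain g b where s: "s = (g, b)" by fastforce
    have sg: "\<forall>l\<in>set (Vf eta a s). snd l = snd s"
      using pw_sign[of "(B1, True)" True "(B2, True)"] pw_sign[of "(B2, False)" False "(B1, False)"]
      by (cases b) (simp_all add: s VfT VfF)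
    have "eta (B1, a) \<le> Q" using bq by blast
    moreover have "2 * eta (g, a) + 2 * (4 * Q - 2 * eta (g, a)) \<ge> 2 * Q + 2" using bq[of g] by linarith
    ultimately have "2 * min (eta (B1, a)) (eta (B2, a)) + 2 \<le> length (Vf eta a s)"
      by (cases b) (auto simp: s VfT VfF length_pw)
    then show ?thesis using sg rdw_sign[OF sg] by blast
  qed
  show "\<exists>Y0 Z V'. Vf eta a s = Y0 @ Z \<and> Vf eta a s' = winv Z @ V' \<and>
      length Z = min (eta (B1, a)) (eta (B2, a)) \<and> Y0 \<noteq> [] \<and> V' \<noteq> [] \<and> \<not> canc (last Y0) (hd V')"
    if "isB s" "isB s'" "snd s \<noteq> snd s'" "fst s \<noteq> fst s'" for s s'
  proof -
    obtain g b where s: "s = (g, b)" by fastforce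
    obtain g' b' where s': "s' = (g', b')" by fastforce
    have gg: "{g, g'} = {B1, B2}" using that s s' by (auto simp: isB_def)
    have mm: "min (eta (g, a)) (eta (g', a)) = min (eta (B1, a)) (eta (B2, a))"
      using gg by (auto simp: doubleton_eq_iff min.commute)
    have kk: "eta (g, a) \<noteq> eta (g', a)" using gg inj by (auto simp: doubleton_eq_iff)
    have n1: "4 * Q - 2 * eta (h, a) \<ge> 1" for h using bq[of h] by linarith
    show ?thesis
    proof (cases b)
      case True
      then have b': "b' = False" using that s s' by simp
      show ?thesis using junction[of "(B1, True)" "(B2, True)" "eta (g, a)" "eta (g', a)", OF _ kk n1 n1] mm
        by (simp add: s s' True b' VfT VfF iv_def)
    next
      case False
      then have b': "b' = True" using that s s' by simp
      show ?thesis using junction[of "(B2, False)" "(B1, False)" "eta (g, a)" "eta (g', a)", OF _ kk n1 n1] mm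
        by (simp add: s s' False b' VfT VfF iv_def)
    qed
  qed
qed (use assms in auto)



definition flipl :: "'a letter \<Rightarrow> 'a letter" where "flipl s = (fst s, \<not> snd s)"

definition gapw :: "('a gen \<times> 'a \<Rightarrow> nat) \<Rightarrow> 'a \<Rightarrow> bool \<Rightarrow> 'a word \<Rightarrow> 'a word" where
  "gapw eta a e \<sigma> = red ((if e then winv (concat (map (Vf eta a) \<sigma>)) else []) @ map flipl \<sigma>)"

definition Inv :: "('a gen \<times> 'a \<Rightarrow> nat) \<Rightarrow> 'a word \<Rightarrow> 'a word \<Rightarrow> nat \<Rightarrow> bool" where
  "Inv eta h W i \<longleftrightarrow> ((\<forall>q<i. isB (h ! q)) \<and> W = map flipl (take i h)) \<or>
     (\<exists>p<i. \<exists>a e P. h ! p = (Ag a, e) \<and> (\<forall>q. p < q \<and> q < i \<longrightarrow> isB (h ! q)) \<and> rdw (P @ [(Ag a, \<not> e)])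
        \<and> W = P @ [(Ag a, \<not> e)] @ gapw eta a e (drop (Suc p) (take i h)))"

lemma rdw_flip: "rdw \<sigma> \<Longrightarrow> rdw (map flipl \<sigma>)"
  by (induction \<sigma> rule: rdw.induct) (auto simp: flipl_def canc_def)

lemma allB_flip: "allB \<sigma> \<Longrightarrow> allB (map flipl \<sigma>)"
  by (auto simp: allB_def flipl_def isB_def)

lemma QxG_red: "rdw (Q @ [(Ag a, s)]) \<Longrightarrow> allB \<beta> \<Longrightarrow> red (Q @ [(Ag a, s)] @ \<beta>) = Q @ [(Ag a, s)] @ red \<beta>"
  apply (rule red_eqI)
   apply (rule rdw_QxG; simp add: allB_red rdw_red)
  using red_r[of "Q @ [(Ag a, s)]" \<beta>] by simp

lemma psi_fc: "psi eta y = hom_ext (fc (vword eta y))"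
  unfolding psi_def by (rule arg_cong[where f = hom_ext]) (auto simp: fc_def split: gen.split)

lemma psi_inv_fc: "psi_inv eta y = hom_ext (fc (\<lambda>a. winv (vword eta y a)))"
  unfolding psi_inv_def by (rule arg_cong[where f = hom_ext]) (auto simp: fc_def split: gen.split)

lemma set_pw: "set (pw x y n k) \<subseteq> {x, y}"
proof -
  have "set (concat (replicate n [y, x])) \<subseteq> {x, y}" by (induction n) auto
  then show ?thesis by (auto simp: pw_def)
qed

lemma cv:
  fixes eta :: "'a gen \<times> 'a \<Rightarrow> nat"
  shows "\<forall>a. allB (vword eta y a) \<and> rdw (vword eta y a)"
    "\<forall>a. allB (winv (vword eta y a)) \<and> rdw (winv (vword eta y a))"
proof -
  have st1: "set (vword eta y a) \<subseteq> {(B1, True), (B2, True)}" for a by (simp add: vword_pw set_pw)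
  have st2: "set (winv (vword eta y a)) \<subseteq> {(B2, False), (B1, False)}" for a
    by (simp add: vword_pw winv_pw iv_def set_pw)
  have st1: "set (vword eta y a) \<subseteq> {(B1, True), (B2, True)}" for a by (simp add: vword_pw set_pw)
  have st2: "set (winv (vword eta y a)) \<subseteq> {(B2, False), (B1, False)}" for a
    by (simp add: vword_pw winv_pw iv_def set_pw)
  have s1: "\<forall>l\<in>set (vword eta y a). snd l = True" for a using st1[of a] by auto
  have b1: "allB (vword eta y a)" for a using st1[of a] by (auto simp: allB_def isB_def)
  have s2: "\<forall>l\<in>set (winv (vword eta y a)). snd l = False" for a using st2[of a] by auto
  show "\<forall>a. allB (vword eta y a) \<and> rdw (vword eta y a)" using b1 s1 rdw_sign[of "vword eta y _" True] by simp
  show "\<forall>a. allB (winv (vword eta y a)) \<and> rdw (winv (vword eta y a))"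
    using b1 s2 rdw_sign[of "winv (vword eta y _)" False] allB_winv[OF b1] by simp
qed

lemma Vf_allB: "allB (Vf eta a s)"
  using cv[of eta "fst s"] allB_winv by (simp add: Vf_def)

lemma concat_allB: "allB (concat (map (Vf eta a) \<sigma>))"
  by (induction \<sigma>) (simp_all add: Vf_allB)

lemma gap_allB: "allB \<sigma> \<Longrightarrow> allB (gapw eta a e \<sigma>)"
  by (auto simp: gapw_def intro!: allB_red allB_winv concat_allB allB_flip)

lemma gap_empty_F: "rdw \<sigma> \<Longrightarrow> gapw eta a False \<sigma> = [] \<Longrightarrow> \<sigma> = []"
  using red_id[OF rdw_flip] by (fastforce simp: gapw_def)

lemma gap_empty_T:
  fixes eta :: "'a gen \<times> 'a \<Rightarrow> nat"
  assumes inj: "eta (B1, a) \<noteq> eta (B2, a)"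
    and bnd: "\<And>g. 1 \<le> eta (g, a) \<and> eta (g, a) \<le> Dconst TYPE('a) div 4"
    and D4: "Dconst TYPE('a) = 4 * (Dconst TYPE('a) div 4)"
    and r: "rdw \<sigma>" and b: "allB \<sigma>" and G: "gapw eta a True \<sigma> = []"
  shows "\<sigma> = []"
proof (rule ccontr)
  assume ne: "\<sigma> \<noteq> []"
  let ?C = "concat (map (Vf eta a) \<sigma>)"
  have "red (map flipl \<sigma>) = red (?C @ winv ?C @ map flipl \<sigma>)" using red_cancel by metis
  also have "\<dots> = red (?C @ red (winv ?C @ map flipl \<sigma>))" by (rule red_app_r)
  also have "\<dots> = red ?C" using G by (simp add: gapw_def)
  finally have "red ?C = map flipl \<sigma>" using red_id[OF rdw_flip[OF r]] by simp
  moreover have "length \<sigma> < length (red ?C)" using core_eta[OF inj bnd D4 ne b r] .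
  ultimately show False by simp
qed



lemma allB_sub: "\<forall>q. p < q \<and> q < i \<longrightarrow> isB (h ! q) \<Longrightarrow> i \<le> length h \<Longrightarrow> allB (drop (Suc p) (take i h))"
  unfolding allB_def
proof
  fix x assume A: "\<forall>q. p < q \<and> q < i \<longrightarrow> isB (h ! q)" "i \<le> length h" and x: "x \<in> set (drop (Suc p) (take i h))"
  then obtain j where j: "j < length (drop (Suc p) (take i h))" "x = drop (Suc p) (take i h) ! j"
    by (auto simp: in_set_conv_nth)
  then have "x = h ! (Suc p + j)" "Suc p + j < i" using A(2) by auto
  then show "isB x" using A(1) by auto
qed

lemma allB_take: "\<forall>q<i. isB (h ! q) \<Longrightarrow> allB (take i h)"
  unfolding allB_def
proof
  fix x assume A: "\<forall>q<i. isB (h ! q)" and "x \<in> set (take i h)"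
  then obtain j where "j < length (take i h)" "x = take i h ! j" by (auto simp: in_set_conv_nth)
  then show "isB x" using A by auto
qed

lemma rdw_sub: "rdw h \<Longrightarrow> rdw (drop j (take i h))"
  by (intro rdw_drop rdw_take)

lemma step_inv:
  fixes eta :: "'a gen \<times> 'a \<Rightarrow> nat"
  assumes inj: "\<And>a. eta (B1, a) \<noteq> eta (B2, a)"
    and bnd: "\<And>g a. 1 \<le> eta (g, a) \<and> eta (g, a) \<le> Dconst TYPE('a) div 4"
    and D4: "Dconst TYPE('a) = 4 * (Dconst TYPE('a) div 4)"
    and hr: "rdw h"
    and i: "i < length h"
    and I: "Inv eta h W i"
  shows "Inv eta h (step eta (h ! i) W) (Suc i)"
proof -
  have adj: "\<not> canc (h ! p) (h ! Suc p)" if "Suc p < length h" for p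
    using hr that unfolding rdw_eq reduced_word_def canc_def by blast
  have tk: "take (Suc i) h = take i h @ [h ! i]" using i by (simp add: take_Suc_conv_app_nth)
  obtain y e0 where s: "h ! i = (y, e0)" by fastforce
  from I[unfolded Inv_def] show ?thesis
  proof (elim disjE exE conjE)
    assume allb: "\<forall>q<i. isB (h ! q)" and W: "W = map flipl (take i h)"
    have gB: "allB W" using allb W by (simp add: allB_take allB_flip)
    have gr: "rdw W" using W hr by (simp add: rdw_flip rdw_take)
    show ?thesis
    proof (cases "isB (h ! i)")
      case True
      have allb': "\<forall>q<Suc i. isB (h ! q)" using allb True less_Suc_eq by auto
      have r1: "rdw (map flipl (take (Suc i) h))" using hr by (simp add: rdw_flip rdw_take)
      have yB: "allB [(y, b)]" for b using True s by (simp add: isB_def)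
      have "step eta (h ! i) W = map flipl (take (Suc i) h)"
      proof (cases e0)
        case True
        have "step eta (h ! i) W = red (red W @ [(y, False)])"
          using s True gB by (simp add: step_def psi_fc hom_B uword_def)
        also have "\<dots> = red (W @ [flipl (h ! i)])" using s True by (simp add: red_l flipl_def)
        also have "\<dots> = map flipl (take (Suc i) h)" using W tk red_id[OF r1] by simp
        finally show ?thesis .
      next
        case False
        have e: "red (W @ [(y, True)]) = map flipl (take (Suc i) h)"
          using W tk red_id[OF r1] s False by (simp add: flipl_def)
        have "step eta (h ! i) W = psi_inv eta y (map flipl (take (Suc i) h))"
          using s False by (simp add: step_def uword_def e)
        also have "\<dots> = map flipl (take (Suc i) h)"
          using allb' r1 by (simp add: psi_inv_fc hom_B allB_take allB_flip red_id)
        finally show ?thesis .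
      qed
      then show ?thesis using allb' unfolding Inv_def by blast
    next
      case False
      then obtain a where y: "y = Ag a" using s by (cases y) (auto simp: isB_def)
      have rWx: "rdw (W @ [(Ag a, b)])" for b
      proof (rule rdw_snoc[OF gr])
        assume "W \<noteq> []" then have "isB (last W)" using gB by (simp add: allB_def)
        then show "\<not> canc (last W) (Ag a, b)" by (auto simp: canc_def isB_def)
      qed
      have gap0: "gapw eta a e [] = []" for e by (simp add: gapw_def)
      have dr: "drop (Suc i) (take (Suc i) h) = []" by simp
      show ?thesis
      proof (cases e0)
        case True
        have "step eta (h ! i) W = red (W @ [(Ag a, False)])"
          using s True gB y by (simp add: step_def psi_fc hom_B uword_def red_l)
        also have "\<dots> = W @ [(Ag a, \<not> True)] @ gapw eta a True (drop (Suc i) (take (Suc i) h))"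
          using red_id[OF rWx] dr gap0 by simp
        finally show ?thesis using rWx[of False] s y True
          unfolding Inv_def by (intro disjI2 exI[of _ i] conjI exI[of _ a] exI[of _ True] exI[of _ W]) auto
      next
        case False
        obtain P' where sk: "psi_inv eta (Ag a) (W @ [(Ag a, True)] @ []) = P' @ [(Ag a, True)] @ red (Lc (\<lambda>a'. winv (vword eta (Ag a) a')) a True @ [])"
          and rP: "rdw (P' @ [(Ag a, True)])"
          using skel[OF cv(2)[of eta "Ag a"], of W a True "[]"] rWx[of True] unfolding psi_inv_fc by auto
        have "step eta (h ! i) W = psi_inv eta (Ag a) (W @ [(Ag a, True)] @ [])"
          using s False y red_id[OF rWx] by (simp add: step_def uword_def)
        also have "\<dots> = P' @ [(Ag a, True)] @ red (Lc (\<lambda>a'. winv (vword eta (Ag a) a')) a True @ [])" by (rule sk)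
        also have "\<dots> = P' @ [(Ag a, \<not> False)] @ gapw eta a False (drop (Suc i) (take (Suc i) h))"
          using dr gap0 by (simp add: Lc_def)
        finally show ?thesis using rP s y False
          unfolding Inv_def by (intro disjI2 exI[of _ i] conjI exI[of _ a] exI[of _ False] exI[of _ P']) auto
      qed
    qed
  next
    fix p a e P
    assume pi: "p < i" and hp: "h ! p = (Ag a, e)" and bq: "\<forall>q. p < q \<and> q < i \<longrightarrow> isB (h ! q)"
      and rP: "rdw (P @ [(Ag a, \<not> e)])"
      and W: "W = P @ [(Ag a, \<not> e)] @ gapw eta a e (drop (Suc p) (take i h))"
    define \<sigma> where "\<sigma> = drop (Suc p) (take i h)"
    define G where "G = gapw eta a e \<sigma>"
    have \<sigma>B: "allB \<sigma>" using allB_sub[OF bq] i by (simp add: \<sigma>_def)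
    have \<sigma>r: "rdw \<sigma>" using rdw_sub[OF hr] by (simp add: \<sigma>_def)
    have GB: "allB G" using gap_allB[OF \<sigma>B] by (simp add: G_def)
    have Gr: "rdw G" by (simp add: G_def gapw_def rdw_red)
    have W': "W = P @ [(Ag a, \<not> e)] @ G" using W by (simp add: G_def \<sigma>_def)
    have ds: "drop (Suc p) (take (Suc i) h) = \<sigma> @ [h ! i]" using tk pi i by (simp add: \<sigma>_def)
    have \<sigma>0: "\<sigma> = [] \<Longrightarrow> i = Suc p" using pi i by (simp add: \<sigma>_def)
    have rW: "rdw W" using rdw_QxG[OF rP GB Gr] W' by simp
    show ?thesis
    proof (cases "isB (h ! i)")
      case True
      have bq': "\<forall>q. p < q \<and> q < Suc i \<longrightarrow> isB (h ! q)" using bq True less_Suc_eq by auto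
      have yB: "allB [(y, b)]" for b using True s by (simp add: isB_def)
      have newgap: "red (Lc c a (\<not> e) @ G @ [(y, \<not> e0)]) = gapw eta a e (\<sigma> @ [h ! i])"
        if "Lc c a (\<not> e) = (if e then winv (Vf eta a (y, e0)) else [])" for c
      proof (cases e)
        case True
        have "red (Lc c a (\<not> e) @ G @ [(y, \<not> e0)]) =
            red (winv (Vf eta a (y, e0)) @ winv (concat (map (Vf eta a) \<sigma>)) @ map flipl \<sigma> @ [(y, \<not> e0)])"
          using that True red_mid[of "winv (Vf eta a (y, e0))" "winv (concat (map (Vf eta a) \<sigma>)) @ map flipl \<sigma>" "[(y, \<not> e0)]"]
          by (simp add: G_def gapw_def)
        then show ?thesis using True s by (simp add: gapw_def flipl_def)
      next
        case False
        then show ?thesis using that s red_l[of "map flipl \<sigma>" "[(y, \<not> e0)]"]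
          by (simp add: G_def gapw_def flipl_def)
      qed
      obtain P' where Wn: "step eta (h ! i) W = P' @ [(Ag a, \<not> e)] @ gapw eta a e (\<sigma> @ [h ! i])"
        and rP': "rdw (P' @ [(Ag a, \<not> e)])"
      proof (cases e0)
        case True
        let ?c = "vword eta y"
        obtain P' where sk: "psi eta y W = P' @ [(Ag a, \<not> e)] @ red (Lc ?c a (\<not> e) @ G)"
          and rP': "rdw (P' @ [(Ag a, \<not> e)])"
          using skel[OF cv(1)[of eta y], of P a "\<not> e" G] rW W' GB unfolding psi_fc by auto
        have Lc: "Lc ?c a (\<not> e) = (if e then winv (Vf eta a (y, e0)) else [])"
          using True by (simp add: Lc_def Vf_def)
        have "step eta (h ! i) W = red (P' @ [(Ag a, \<not> e)] @ red (Lc ?c a (\<not> e) @ G) @ [(y, False)])"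
          using s True sk by (simp add: step_def uword_def)
        also have "\<dots> = P' @ [(Ag a, \<not> e)] @ red (red (Lc ?c a (\<not> e) @ G) @ [(y, False)])"
        proof -
          have "allB (red (Lc ?c a (\<not> e) @ G) @ [(y, False)])"
            using yB GB cv(1)[of eta y] by (auto simp: Lc_def allB_winv intro!: allB_red)
          from QxG_red[OF rP' this] show ?thesis by simp
        qed
        also have "\<dots> = P' @ [(Ag a, \<not> e)] @ gapw eta a e (\<sigma> @ [h ! i])"
          using newgap[OF Lc] True red_l[of "Lc ?c a (\<not> e) @ G" "[(y, False)]"] by simp
        finally show ?thesis using that rP' by blast
      next
        case False
        let ?c = "\<lambda>a'. winv (vword eta y a')"
        have e1: "red (W @ [(y, True)]) = P @ [(Ag a, \<not> e)] @ red (G @ [(y, True)])"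
          using QxG_red[OF rP] GB yB W' by simp
        have GB2: "allB (red (G @ [(y, True)]))" using GB yB by (simp add: allB_red)
        obtain P' where sk: "psi_inv eta y (red (W @ [(y, True)])) = P' @ [(Ag a, \<not> e)] @ red (Lc ?c a (\<not> e) @ red (G @ [(y, True)]))"
          and rP': "rdw (P' @ [(Ag a, \<not> e)])"
          using skel[OF cv(2)[of eta y], of P a "\<not> e" "red (G @ [(y, True)])"] QxG_red rW GB2 e1
            rdw_QxG[OF rP GB2 rdw_red] by (auto simp: psi_inv_fc)
        have Lc: "Lc ?c a (\<not> e) = (if e then winv (Vf eta a (y, e0)) else [])"
          using False by (simp add: Lc_def Vf_def)
        have "step eta (h ! i) W = P' @ [(Ag a, \<not> e)] @ red (Lc ?c a (\<not> e) @ red (G @ [(y, True)]))"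
          using s False sk by (simp add: step_def uword_def)
        also have "\<dots> = P' @ [(Ag a, \<not> e)] @ gapw eta a e (\<sigma> @ [h ! i])"
          using newgap[OF Lc] False red_r[of "Lc ?c a (\<not> e)" "G @ [(y, True)]"] by simp
        finally show ?thesis using that rP' by blast
      qed
      show ?thesis using Wn rP' hp bq' pi ds
        unfolding Inv_def by (intro disjI2 exI[of _ p] conjI exI[of _ a] exI[of _ e] exI[of _ P']) auto
    next
      case False
      then obtain a' where y: "y = Ag a'" using s by (cases y) (auto simp: isB_def)
      have gap0: "gapw eta a' e' [] = []" for e' by (simp add: gapw_def)
      have dr: "drop (Suc i) (take (Suc i) h) = []" by simp
      show ?thesis
      proof (cases e0)
        case True
        let ?c = "vword eta (Ag a')"
        obtain P' where sk: "psi eta (Ag a') W = P' @ [(Ag a, \<not> e)] @ red (Lc ?c a (\<not> e) @ G)"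
          and rP': "rdw (P' @ [(Ag a, \<not> e)])"
          using skel[OF cv(1)[of eta "Ag a'"], of P a "\<not> e" G] rW W' GB unfolding psi_fc by auto
        define G' where "G' = red (Lc ?c a (\<not> e) @ G)"
        have G'B: "allB G'" using GB cv(1)[of eta "Ag a'"] by (auto simp: G'_def Lc_def allB_winv intro!: allB_red)
        have r1: "rdw (P' @ [(Ag a, \<not> e)] @ G')" using rdw_QxG[OF rP' G'B] by (simp add: G'_def rdw_red)
        have nc: "\<not> canc (last (P' @ [(Ag a, \<not> e)] @ G')) (Ag a', False)"
        proof (cases "G' = []")
          case False
          then have "isB (last G')" using G'B by (simp add: allB_def)
          then show ?thesis using False by (auto simp: canc_def isB_def)
        next
          case G0: True
          show ?thesis
          proof
            assume "canc (last (P' @ [(Ag a, \<not> e)] @ G')) (Ag a', False)"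
            then have aa: "a' = a" and ee: "e = False" using G0 by (auto simp: canc_def)
            then have "G = []" using G0 by (simp add: G'_def Lc_def Gr red_id)
            then have "\<sigma> = []" using gap_empty_F[OF \<sigma>r] ee by (simp add: G_def)
            then have "i = Suc p" by (rule \<sigma>0)
            then show False using adj[of p] i hp s y True aa ee by (auto simp: canc_def)
          qed
        qed
        have r2: "rdw ((P' @ [(Ag a, \<not> e)] @ G') @ [(Ag a', False)])"
          using rdw_snoc[OF _ nc] r1 by simp
        have "step eta (h ! i) W = red ((P' @ [(Ag a, \<not> e)] @ G') @ [(Ag a', False)])"
          using s True y sk by (simp add: step_def uword_def G'_def)
        also have "\<dots> = (P' @ [(Ag a, \<not> e)] @ G') @ [(Ag a', \<not> True)] @ gapw eta a' True (drop (Suc i) (take (Suc i) h))"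
          using red_id[OF r2] dr gap0 by simp
        finally show ?thesis using r2 s y True
          unfolding Inv_def by (intro disjI2 exI[of _ i] conjI exI[of _ a'] exI[of _ True] exI[of _ "P' @ [(Ag a, \<not> e)] @ G'"]) auto
      next
        case False
        have nc: "\<not> canc (last (P @ [(Ag a, \<not> e)] @ G)) (Ag a', True)"
        proof (cases "G = []")
          case False
          then have "isB (last G)" using GB by (simp add: allB_def)
          then show ?thesis using False by (auto simp: canc_def isB_def)
        next
          case G0: True
          show ?thesis
          proof
            assume "canc (last (P @ [(Ag a, \<not> e)] @ G)) (Ag a', True)"
            then have aa: "a' = a" and ee: "e = True" using G0 by (auto simp: canc_def)
            have bnd': "\<And>g. 1 \<le> eta (g, a) \<and> eta (g, a) \<le> Dconst TYPE('a) div 4" using bnd by blast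
            have "\<sigma> = []" using gap_empty_T[OF inj bnd' D4 \<sigma>r \<sigma>B] G0 ee by (simp add: G_def)
            then have "i = Suc p" by (rule \<sigma>0)
            then show False using adj[of p] i hp s y False aa ee by (auto simp: canc_def)
          qed
        qed
        have r2: "rdw ((P @ [(Ag a, \<not> e)] @ G) @ [(Ag a', True)] @ [])"
          using rdw_snoc[OF _ nc] rW W' by simp
        obtain P' where sk: "psi_inv eta (Ag a') ((P @ [(Ag a, \<not> e)] @ G) @ [(Ag a', True)] @ []) = P' @ [(Ag a', True)] @ red (Lc (\<lambda>a''. winv (vword eta (Ag a') a'')) a' True @ [])"
          and rP': "rdw (P' @ [(Ag a', True)])"
          using skel[OF cv(2)[of eta "Ag a'"], of "P @ [(Ag a, \<not> e)] @ G" a' True "[]"] r2 unfolding psi_inv_fc by auto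
        have "step eta (h ! i) W = psi_inv eta (Ag a') ((P @ [(Ag a, \<not> e)] @ G) @ [(Ag a', True)] @ [])"
          using s False y red_id[OF r2] W' by (simp add: step_def uword_def)
        also have "\<dots> = P' @ [(Ag a', True)] @ red (Lc (\<lambda>a''. winv (vword eta (Ag a') a'')) a' True @ [])" by (rule sk)
        also have "\<dots> = P' @ [(Ag a', \<not> False)] @ gapw eta a' False (drop (Suc i) (take (Suc i) h))"
          using dr gap0 by (simp add: Lc_def)
        finally show ?thesis using rP' s y False
          unfolding Inv_def by (intro disjI2 exI[of _ i] conjI exI[of _ a'] exI[of _ False] exI[of _ P']) auto
      qed
    qed
  qed
qed



theorem lemma5p13:
  fixes eta :: "'a::finite gen \<times> 'a \<Rightarrow> nat"
    and h :: "('a gen \<times> bool) list"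
    and w :: "nat \<Rightarrow> 'a word"
  assumes "bij_betw eta UNIV {1 .. Dconst TYPE('a) div 4}"
    and "w 0 = []"
    and "\<forall>i < length h. w (Suc i) = step eta (h ! i) (w i)"
    and "w (length h) = []"
    and "reduced_word h"
  shows "length h = 0"
proof -
  have injE: "inj eta" using assms(1) bij_betw_imp_inj_on by blast
  have inj: "\<And>a. eta (B1, a) \<noteq> eta (B2, a)" using injE by (auto dest: injD)
  have bnd: "\<And>g a. 1 \<le> eta (g, a) \<and> eta (g, a) \<le> Dconst TYPE('a) div 4"
    using assms(1) bij_betwE by fastforce
  have D4: "Dconst TYPE('a) = 4 * (Dconst TYPE('a) div 4)" by (simp add: Dconst_def)
  have hr: "rdw h" using assms(5) rdw_eq by blast
  have inv: "i \<le> length h \<Longrightarrow> Inv eta h (w i) i" for i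
  proof (induction i)
    case 0 then show ?case using assms(2) by (simp add: Inv_def)
  next
    case (Suc i)
    then have il: "i < length h" by simp
    have "Inv eta h (step eta (h ! i) (w i)) (Suc i)"
      using step_inv[OF inj bnd D4 hr il] Suc by simp
    then show ?case using assms(3) il by simp
  qed
  have "Inv eta h [] (length h)" using inv[of "length h"] assms(4) by simp
  then show ?thesis unfolding Inv_def by auto
qed

end
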